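(* Let $R=K[x_1,\ldots,x_n]$ over a field $K$, let $I\subset R$ be a square-free monomial ideal, $\mathfrak{p}\subset R$ a monomial prime ideal, and let $\{u_1,\ldots,u_{\beta_1(I)}\}\subseteq\mathcal{G}(I)$ be an independent set of maximum cardinality $\beta_1(I)$. Suppose that for some positive integer $s$ we have $\mathfrak{p}\setminus x_i\notin\mathrm{Ass}(R/(I\setminus x_i)^s)$ for every variable $x_i$ dividing $\prod_{j=1}^{\beta_1(I)}u_j$. If $\mathfrak{p}\in\mathrm{Ass}(R/I^s)$, then $s\geq\beta_1(I)+1$.
   Context: $\mathcal{G}(I)$ is the minimal monomial generating set of $I$. A subset $\Gamma\subseteq\mathcal{G}(I)$ is independent if $\gcd(f,g)=1$ for all distinct $f,g\in\Gamma$; $\beta_1(I)$ is the maximum cardinality of an independent set in $I$. The deletion $I\setminus x_i$ is the monomial ideal generated by those $u\in\mathcal{G}(I)$ with $x_i\nmid u$; for a monomial prime $\mathfrak{p}$, $\mathfrak{p}\setminus x_i$ is generated by the variables of $\mathfrak{p}$ other than $x_i$. *)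

theory Defs
  imports "HOL-Library.Poly_Mapping"
begin

text \<open>Polynomial ring R = K[x_v : v in 'v] over a field K, with a finite type 'v of
  variables (so n = CARD('v)). A polynomial maps exponent vectors (monomials) to coefficients.\<close>
type_synonym ('v, 'k) mpoly = "('v \<Rightarrow>\<^sub>0 nat) \<Rightarrow>\<^sub>0 'k"

definition monom :: "('v \<Rightarrow>\<^sub>0 nat) \<Rightarrow> ('v, 'k::field) mpoly" where
  "monom a = Poly_Mapping.single a 1"

definition var :: "'v \<Rightarrow> ('v, 'k::field) mpoly" where
  "var i = monom (Poly_Mapping.single i 1)"

definition ideal_gen :: "'a::comm_ring_1 set \<Rightarrow> 'a set" where
  "ideal_gen S = {(\<Sum>a\<in>t. r a * a) | t r. finite t \<and> t \<subseteq> S}"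

definition is_ideal :: "'a::comm_ring_1 set \<Rightarrow> bool" where
  "is_ideal J \<longleftrightarrow> 0 \<in> J \<and> (\<forall>a\<in>J. \<forall>b\<in>J. a + b \<in> J) \<and> (\<forall>r. \<forall>a\<in>J. r * a \<in> J)"

definition prime_ideal :: "'a::comm_ring_1 set \<Rightarrow> bool" where
  "prime_ideal P \<longleftrightarrow> is_ideal P \<and> P \<noteq> UNIV \<and> (\<forall>a b. a * b \<in> P \<longrightarrow> a \<in> P \<or> b \<in> P)"

definition ideal_pow :: "'a::comm_ring_1 set \<Rightarrow> nat \<Rightarrow> 'a set" where
  "ideal_pow J s = ideal_gen {(\<Prod>i<s. f i) | f. \<forall>i<s. f i \<in> J}"

text \<open>Associated primes of R/J: primes of the form (J : f) = Ann(f + J).\<close>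
definition Ass :: "'a::comm_ring_1 set \<Rightarrow> 'a set set" where
  "Ass J = {P. prime_ideal P \<and> (\<exists>f. P = {g. g * f \<in> J})}"

definition mdvd :: "('v \<Rightarrow>\<^sub>0 nat) \<Rightarrow> ('v \<Rightarrow>\<^sub>0 nat) \<Rightarrow> bool" where
  "mdvd a b \<longleftrightarrow> (\<forall>i. Poly_Mapping.lookup a i \<le> Poly_Mapping.lookup b i)"

definition squarefree_mon :: "('v \<Rightarrow>\<^sub>0 nat) \<Rightarrow> bool" where
  "squarefree_mon a \<longleftrightarrow> (\<forall>i. Poly_Mapping.lookup a i \<le> 1)"

definition monomial_ideal :: "('v, 'k::field) mpoly set \<Rightarrow> bool" where
  "monomial_ideal I \<longleftrightarrow> (\<exists>S. I = ideal_gen (monom ` S))"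

definition squarefree_monomial_ideal :: "('v, 'k::field) mpoly set \<Rightarrow> bool" where
  "squarefree_monomial_ideal I \<longleftrightarrow> (\<exists>S. (\<forall>a\<in>S. squarefree_mon a) \<and> I = ideal_gen (monom ` S))"

definition mingens :: "('v, 'k::field) mpoly set \<Rightarrow> ('v \<Rightarrow>\<^sub>0 nat) set" where
  "mingens I = {a. monom a \<in> I \<and> (\<forall>b. monom b \<in> I \<and> mdvd b a \<longrightarrow> b = a)}"

text \<open>Independent subsets of G(I): pairwise gcd 1, i.e. pairwise disjoint supports.\<close>
definition independent :: "('v, 'k::field) mpoly set \<Rightarrow> ('v \<Rightarrow>\<^sub>0 nat) set \<Rightarrow> bool" where
  "independent I \<Gamma> \<longleftrightarrow> \<Gamma> \<subseteq> mingens I \<and> (\<forall>f\<in>\<Gamma>. \<forall>g\<in>\<Gamma>. f \<noteq> g \<longrightarrow> Poly_Mapping.keys f \<inter> Poly_Mapping.keys g = {})"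

definition beta1 :: "('v, 'k::field) mpoly set \<Rightarrow> nat" where
  "beta1 I = Max (card ` {\<Gamma>. independent I \<Gamma>})"

definition deletion :: "('v, 'k::field) mpoly set \<Rightarrow> 'v \<Rightarrow> ('v, 'k) mpoly set" where
  "deletion I i = ideal_gen (monom ` {u \<in> mingens I. i \<notin> Poly_Mapping.keys u})"

definition var_prime :: "'v set \<Rightarrow> ('v, 'k::field) mpoly set" where
  "var_prime A = ideal_gen (var ` A)"

end

theory Submission
  imports Defs
begin


lemma mdvd_iff_ex: "mdvd a b \<longleftrightarrow> (\<exists>c. b = a + c)"
proof
  assume h: "mdvd a b"
  have "b = a + (b - a)"
    using h unfolding mdvd_def by (simp add: poly_mapping_eq_iff fun_eq_iff lookup_add lookup_minus)
  then show "\<exists>c. b = a + c" by blast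
qed (auto simp: mdvd_def lookup_add)

lemma mdvd_refl[simp]: "mdvd a a" by (simp add: mdvd_def)
lemma mdvd_trans: "mdvd a b \<Longrightarrow> mdvd b c \<Longrightarrow> mdvd a c"
  unfolding mdvd_def by (meson order_trans)
lemma mdvd_add_mono: "mdvd a b \<Longrightarrow> mdvd c d \<Longrightarrow> mdvd (a + c) (b + d)"
  unfolding mdvd_def by (simp add: lookup_add add_mono)
lemma mdvd_add_right: "mdvd a b \<Longrightarrow> mdvd a (b + c)"
  unfolding mdvd_def by (simp add: lookup_add add_increasing2)
lemma mdvd_add_left: "mdvd a b \<Longrightarrow> mdvd a (c + b)"
  unfolding mdvd_def by (simp add: lookup_add add_increasing)
lemma mdvd_zero[simp]: "mdvd 0 a" by (simp add: mdvd_def)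

definition MI :: "('v \<Rightarrow>\<^sub>0 nat) set \<Rightarrow> ('v, 'k::field) mpoly set" where
  "MI S = {g. \<forall>t\<in>Poly_Mapping.keys g. \<exists>a\<in>S. mdvd a t}"

lemma poly_expansion:
  "(f::'a \<Rightarrow>\<^sub>0 'b::comm_monoid_add) = (\<Sum>t\<in>Poly_Mapping.keys f. Poly_Mapping.single t (Poly_Mapping.lookup f t))"
proof (rule poly_mapping_eqI)
  fix x
  show "Poly_Mapping.lookup f x = Poly_Mapping.lookup (\<Sum>t\<in>Poly_Mapping.keys f. Poly_Mapping.single t (Poly_Mapping.lookup f t)) x"
    by (cases "x \<in> Poly_Mapping.keys f")
       (simp_all add: lookup_sum lookup_single when_def in_keys_iff)
qed

lemma lookup_single_mult:
  "Poly_Mapping.lookup (Poly_Mapping.single e c * (f::('v \<Rightarrow>\<^sub>0 nat) \<Rightarrow>\<^sub>0 'k::field)) (e + t) = c * Poly_Mapping.lookup f t"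
proof -
  have "Poly_Mapping.single e c * f = (\<Sum>u\<in>Poly_Mapping.keys f. Poly_Mapping.single (e + u) (c * Poly_Mapping.lookup f u))"
    by (subst poly_expansion[of f]) (simp add: sum_distrib_left mult_single)
  then show ?thesis
    by (cases "t \<in> Poly_Mapping.keys f")
       (simp_all add: lookup_sum lookup_single when_def in_keys_iff)
qed

lemma keys_single_mult:
  "c \<noteq> 0 \<Longrightarrow> Poly_Mapping.keys (Poly_Mapping.single e c * (f::('v \<Rightarrow>\<^sub>0 nat) \<Rightarrow>\<^sub>0 'k::field)) = (\<lambda>t. e + t) ` Poly_Mapping.keys f"
proof
  show "Poly_Mapping.keys (Poly_Mapping.single e c * f) \<subseteq> (\<lambda>t. e + t) ` Poly_Mapping.keys f"
    using keys_mult[of "Poly_Mapping.single e c" f] by (auto split: if_splits)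
next
  assume "c \<noteq> 0"
  then show "(\<lambda>t. e + t) ` Poly_Mapping.keys f \<subseteq> Poly_Mapping.keys (Poly_Mapping.single e c * f)"
    by (auto simp: in_keys_iff lookup_single_mult)
qed

lemma keys_monom_mult:
  "Poly_Mapping.keys (monom e * (f::('v, 'k::field) mpoly)) = (\<lambda>t. e + t) ` Poly_Mapping.keys f"
  by (simp add: monom_def keys_single_mult)

lemma keys_mult_monom:
  "Poly_Mapping.keys ((f::('v, 'k::field) mpoly) * monom e) = (\<lambda>t. t + e) ` Poly_Mapping.keys f"
  by (simp add: mult.commute[of f] keys_monom_mult add.commute)

lemma keys_monom[simp]: "Poly_Mapping.keys (monom a :: ('v, 'k::field) mpoly) = {a}"
  by (simp add: monom_def)

lemma MI_ideal: "is_ideal (MI S :: ('v, 'k::field) mpoly set)"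
  unfolding is_ideal_def MI_def
proof (intro conjI ballI allI)
  show "0 \<in> {g::('v, 'k) mpoly. \<forall>t\<in>Poly_Mapping.keys g. \<exists>a\<in>S. mdvd a t}" by simp
next
  fix a b :: "('v, 'k) mpoly"
  assume "a \<in> {g. \<forall>t\<in>Poly_Mapping.keys g. \<exists>a\<in>S. mdvd a t}" "b \<in> {g. \<forall>t\<in>Poly_Mapping.keys g. \<exists>a\<in>S. mdvd a t}"
  then show "a + b \<in> {g. \<forall>t\<in>Poly_Mapping.keys g. \<exists>a\<in>S. mdvd a t}"
    using keys_add[of a b] by blast
next
  fix r a :: "('v, 'k) mpoly"
  assume h: "a \<in> {g. \<forall>t\<in>Poly_Mapping.keys g. \<exists>a\<in>S. mdvd a t}"
  show "r * a \<in> {g. \<forall>t\<in>Poly_Mapping.keys g. \<exists>a\<in>S. mdvd a t}"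
  proof (safe)
    fix t assume "t \<in> Poly_Mapping.keys (r * a)"
    then obtain x y where "t = x + y" "y \<in> Poly_Mapping.keys a"
      using keys_mult[of r a] by blast
    then show "\<exists>a\<in>S. mdvd a t" using h by (auto intro: mdvd_add_left)
  qed
qed

lemma monom_in_MI: "(monom a :: ('v, 'k::field) mpoly) \<in> MI S \<longleftrightarrow> (\<exists>b\<in>S. mdvd b a)"
  by (simp add: MI_def)



lemma ideal_gen_sub: "X \<subseteq> ideal_gen X"
proof
  fix x assume "x \<in> X"
  then show "x \<in> ideal_gen X" unfolding ideal_gen_def
    by (auto intro!: exI[of _ "{x}"] exI[of _ "\<lambda>_. 1"])
qed

lemma ideal_sum_closed: assumes "is_ideal J" "finite t" "\<forall>a\<in>t. f a \<in> J" shows "sum f t \<in> J"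
  using assms(2,3)
proof (induction t rule: finite_induct)
  case empty then show ?case using assms(1) by (simp add: is_ideal_def)
next
  case (insert x F) then show ?case using assms(1) by (simp add: is_ideal_def)
qed

lemma ideal_gen_least: "is_ideal J \<Longrightarrow> X \<subseteq> J \<Longrightarrow> ideal_gen X \<subseteq> J"
proof
  fix x assume J: "is_ideal J" and X: "X \<subseteq> J" and "x \<in> ideal_gen X"
  then obtain t r where "x = (\<Sum>a\<in>t. r a * a)" "finite t" "t \<subseteq> X" unfolding ideal_gen_def by blast
  then show "x \<in> J" using J X by (auto intro!: ideal_sum_closed simp: is_ideal_def)
qed

lemma ideal_gen_ideal: "is_ideal (ideal_gen X)"
  unfolding is_ideal_def
proof (intro conjI ballI allI)
  show "0 \<in> ideal_gen X" unfolding ideal_gen_def by (auto intro!: exI[of _ "{}"])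
next
  fix a b assume "a \<in> ideal_gen X" "b \<in> ideal_gen X"
  then obtain t1 r1 t2 r2 where a: "a = (\<Sum>x\<in>t1. r1 x * x)" "finite t1" "t1 \<subseteq> X"
     and b: "b = (\<Sum>x\<in>t2. r2 x * x)" "finite t2" "t2 \<subseteq> X" unfolding ideal_gen_def by blast
  define r where "r x = (if x \<in> t1 then r1 x else 0) + (if x \<in> t2 then r2 x else 0)" for x
  have "(\<Sum>x\<in>t1 \<union> t2. r x * x) = (\<Sum>x\<in>t1 \<union> t2. (if x \<in> t1 then r1 x * x else 0)) + (\<Sum>x\<in>t1 \<union> t2. (if x \<in> t2 then r2 x * x else 0))"
    unfolding r_def sum.distrib[symmetric] by (rule sum.cong) (auto simp: distrib_right)
  also have "\<dots> = a + b" using a b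
    by (simp add: sum.If_cases Int_absorb1 Int_absorb2)
  finally show "a + b \<in> ideal_gen X" unfolding ideal_gen_def using a b
    by (auto intro!: exI[of _ "t1 \<union> t2"] exI[of _ r])
next
  fix c a assume "a \<in> ideal_gen X"
  then obtain t r where a: "a = (\<Sum>x\<in>t. r x * x)" "finite t" "t \<subseteq> X" unfolding ideal_gen_def by blast
  then have "c * a = (\<Sum>x\<in>t. (c * r x) * x)" by (simp add: sum_distrib_left mult.assoc)
  then have "\<exists>t' r'. c * a = (\<Sum>x\<in>t'. r' x * x) \<and> finite t' \<and> t' \<subseteq> X" using a by (intro exI[of _ t] exI[of _ "\<lambda>x. c * r x"]) simp
  then show "c * a \<in> ideal_gen X" unfolding ideal_gen_def by blast
qed

lemma ideal_gen_monom: "ideal_gen (monom ` S) = (MI S :: ('v, 'k::field) mpoly set)"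
proof
  show "ideal_gen (monom ` S) \<subseteq> MI S"
    by (rule ideal_gen_least[OF MI_ideal]) (auto simp: monom_in_MI, metis mdvd_refl)
next
  show "MI S \<subseteq> (ideal_gen (monom ` S) :: ('v, 'k) mpoly set)"
  proof
    fix g :: "('v, 'k) mpoly" assume g: "g \<in> MI S"
    have all: "\<forall>t\<in>Poly_Mapping.keys g. Poly_Mapping.single t (Poly_Mapping.lookup g t) \<in> ideal_gen (monom ` S)"
    proof
      fix t assume "t \<in> Poly_Mapping.keys g"
      then obtain a where a: "a \<in> S" "mdvd a t" using g by (auto simp: MI_def)
      then obtain c where c: "t = a + c" by (auto simp: mdvd_iff_ex)
      have "Poly_Mapping.single t (Poly_Mapping.lookup g t) = Poly_Mapping.single c (Poly_Mapping.lookup g t) * monom a"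
        by (simp add: monom_def mult_single c add.commute)
      moreover have "monom a \<in> ideal_gen (monom ` S)" using a ideal_gen_sub by blast
      ultimately show "Poly_Mapping.single t (Poly_Mapping.lookup g t) \<in> ideal_gen (monom ` S)"
        using ideal_gen_ideal unfolding is_ideal_def by metis
    qed
    show "g \<in> ideal_gen (monom ` S)"
      using ideal_sum_closed[OF ideal_gen_ideal finite_keys all] poly_expansion[of g] by simp
  qed
qed

definition sums :: "('v \<Rightarrow>\<^sub>0 nat) set \<Rightarrow> nat \<Rightarrow> ('v \<Rightarrow>\<^sub>0 nat) set" where
  "sums S s = {(\<Sum>j<s. c j) | c. \<forall>j<s. c j \<in> S}"

lemma prod_in_MI:
  "\<forall>j<s. f j \<in> (MI S :: ('v, 'k::field) mpoly set) \<Longrightarrow> (\<Prod>j<s. f j) \<in> MI (sums S s)"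
proof (induction s)
  case 0
  then show ?case by (auto simp: MI_def sums_def intro!: exI[of _ "\<lambda>_. 0"])
next
  case (Suc s)
  have IH: "(\<Prod>j<s. f j) \<in> MI (sums S s)" using Suc by auto
  have fs: "f s \<in> MI S" using Suc by auto
  show ?case unfolding MI_def
  proof safe
    fix t assume "t \<in> Poly_Mapping.keys (\<Prod>j<Suc s. f j)"
    then obtain x y where xy: "t = x + y" "x \<in> Poly_Mapping.keys (\<Prod>j<s. f j)" "y \<in> Poly_Mapping.keys (f s)"
      using keys_mult[of "\<Prod>j<s. f j" "f s"] by (auto simp: mult.commute)
    obtain a where a: "a \<in> sums S s" "mdvd a x" using IH xy by (auto simp: MI_def)
    obtain b where b: "b \<in> S" "mdvd b y" using fs xy by (auto simp: MI_def)
    obtain c where c: "a = (\<Sum>j<s. c j)" "\<forall>j<s. c j \<in> S" using a by (auto simp: sums_def)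
    have "a + b = (\<Sum>j<Suc s. (c(s := b)) j)" using c by simp
    moreover have "\<forall>j<Suc s. (c(s := b)) j \<in> S" using c b by auto
    ultimately have "a + b \<in> sums S (Suc s)" unfolding sums_def by blast
    moreover have "mdvd (a + b) t" using xy a b by (simp add: mdvd_add_mono)
    ultimately show "\<exists>a\<in>sums S (Suc s). mdvd a t" by blast
  qed
qed

lemma ideal_pow_MI: "ideal_pow (MI S :: ('v, 'k::field) mpoly set) s = MI (sums S s)"
proof
  show "ideal_pow (MI S) s \<subseteq> (MI (sums S s) :: ('v, 'k) mpoly set)"
    unfolding ideal_pow_def by (rule ideal_gen_least[OF MI_ideal]) (auto intro: prod_in_MI)
next
  have "monom ` sums S s \<subseteq> {(\<Prod>i<s. f i) | f. \<forall>i<s. f i \<in> (MI S :: ('v, 'k) mpoly set)}"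
  proof
    fix x :: "('v, 'k) mpoly" assume "x \<in> monom ` sums S s"
    then obtain c where c: "x = monom (\<Sum>j<s. c j)" "\<forall>j<s. c j \<in> S" by (auto simp: sums_def)
    have "(monom (\<Sum>j<s. c j) :: ('v, 'k) mpoly) = (\<Prod>j<s. monom (c j))"
    proof (induction s)
      case 0 then show ?case by (simp add: monom_def)
    next
      case (Suc s)
      have "(monom (\<Sum>j<Suc s. c j) :: ('v, 'k) mpoly) = monom (\<Sum>j<s. c j) * monom (c s)"
        by (simp add: monom_def mult_single)
      then show ?case using Suc by simp
    qed
    moreover have "\<forall>j<s. (monom (c j) :: ('v, 'k) mpoly) \<in> MI S" using c by (simp add: monom_in_MI) (metis mdvd_refl)
    ultimately show "x \<in> {(\<Prod>i<s. f i) | f. \<forall>i<s. f i \<in> (MI S :: ('v, 'k) mpoly set)}" using c by blast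
  qed
  then show "MI (sums S s) \<subseteq> ideal_pow (MI S :: ('v, 'k) mpoly set) s"
    unfolding ideal_pow_def ideal_gen_monom[symmetric]
    by (intro ideal_gen_least[OF ideal_gen_ideal]) (meson ideal_gen_sub order_trans)
qed



lemma no_zd:
  fixes f g :: "('v::finite, 'k::field) mpoly"
  assumes "f \<noteq> 0" "g \<noteq> 0" shows "f * g \<noteq> 0"
proof -
  obtain \<iota> :: "'v \<Rightarrow> nat" and n where "\<iota> ` UNIV = {i. i < n}" "inj_on \<iota> UNIV"
    using finite_imp_inj_to_nat_seg[of "UNIV :: 'v set"] by auto
  then have inj: "inj \<iota>" by simp
  define \<Phi> :: "('v \<Rightarrow>\<^sub>0 nat) \<Rightarrow> (nat \<Rightarrow>\<^sub>0 nat)" where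
    "\<Phi> a = (\<Sum>v\<in>UNIV. Poly_Mapping.single (\<iota> v) (Poly_Mapping.lookup a v))" for a
  have Phi_add: "\<Phi> (a + b) = \<Phi> a + \<Phi> b" for a b
    unfolding \<Phi>_def by (simp add: lookup_add single_add sum.distrib)
  have Phi_lookup: "Poly_Mapping.lookup (\<Phi> a) (\<iota> v) = Poly_Mapping.lookup a v" for a v
  proof -
    have "Poly_Mapping.lookup (\<Phi> a) (\<iota> v) = (\<Sum>u\<in>UNIV. if u = v then Poly_Mapping.lookup a u else 0)"
      unfolding \<Phi>_def lookup_sum
      by (rule sum.cong) (auto simp: lookup_single when_def inj_eq[OF inj])
    then show ?thesis by simp
  qed
  have Phi_inj: "\<Phi> a = \<Phi> b \<Longrightarrow> a = b" for a b
    by (metis Phi_lookup poly_mapping_eqI)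
  have lead: "\<exists>\<alpha>\<in>Poly_Mapping.keys p. \<forall>x\<in>Poly_Mapping.keys p. \<Phi> x \<le> \<Phi> \<alpha>"
    if "p \<noteq> 0" for p :: "('v, 'k) mpoly"
  proof -
    have ne: "\<Phi> ` Poly_Mapping.keys p \<noteq> {}" "finite (\<Phi> ` Poly_Mapping.keys p)" using that by auto
    obtain \<alpha> where al: "\<alpha> \<in> Poly_Mapping.keys p" "\<Phi> \<alpha> = Max (\<Phi> ` Poly_Mapping.keys p)"
      using Max_in[OF ne(2) ne(1)] by auto
    have "\<forall>x\<in>Poly_Mapping.keys p. \<Phi> x \<le> \<Phi> \<alpha>"
      using Max_ge[OF ne(2)] al(2) by simp
    then show ?thesis using al(1) by blast
  qed
  have nokey: "\<alpha> + \<beta> \<notin> Poly_Mapping.keys (p * q)"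
    if "\<forall>x\<in>Poly_Mapping.keys p. \<Phi> x \<le> \<Phi> \<alpha>" "\<forall>y\<in>Poly_Mapping.keys q. \<Phi> y < \<Phi> \<beta>"
    for p q :: "('v, 'k) mpoly" and \<alpha> \<beta>
  proof
    assume "\<alpha> + \<beta> \<in> Poly_Mapping.keys (p * q)"
    then obtain x y where "\<alpha> + \<beta> = x + y" "x \<in> Poly_Mapping.keys p" "y \<in> Poly_Mapping.keys q"
      using keys_mult[of p q] by blast
    have "\<Phi> x + \<Phi> y < \<Phi> \<alpha> + \<Phi> \<beta>"
      using that add_le_less_mono \<open>x \<in> _\<close> \<open>y \<in> _\<close> by blast
    moreover have "\<Phi> x + \<Phi> y = \<Phi> \<alpha> + \<Phi> \<beta>"
      using \<open>\<alpha> + \<beta> = x + y\<close> by (metis Phi_add)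
    ultimately show False by simp
  qed
  have split: "\<exists>c p'. c \<noteq> 0 \<and> p = Poly_Mapping.single \<alpha> c + p' \<and> (\<forall>x\<in>Poly_Mapping.keys p'. \<Phi> x < \<Phi> \<alpha>)"
    if "\<alpha> \<in> Poly_Mapping.keys p" "\<forall>x\<in>Poly_Mapping.keys p. \<Phi> x \<le> \<Phi> \<alpha>" for p :: "('v, 'k) mpoly" and \<alpha>
  proof (intro exI conjI)
    show "Poly_Mapping.lookup p \<alpha> \<noteq> 0" using that by (simp add: in_keys_iff)
    show "p = Poly_Mapping.single \<alpha> (Poly_Mapping.lookup p \<alpha>) + (p - Poly_Mapping.single \<alpha> (Poly_Mapping.lookup p \<alpha>))"
      by simp
    show "\<forall>x\<in>Poly_Mapping.keys (p - Poly_Mapping.single \<alpha> (Poly_Mapping.lookup p \<alpha>)). \<Phi> x < \<Phi> \<alpha>"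
    proof
      fix x assume x: "x \<in> Poly_Mapping.keys (p - Poly_Mapping.single \<alpha> (Poly_Mapping.lookup p \<alpha>))"
      then have "x \<noteq> \<alpha>" "x \<in> Poly_Mapping.keys p"
        by (auto simp: in_keys_iff lookup_minus lookup_single when_def split: if_splits)
      then show "\<Phi> x < \<Phi> \<alpha>" using that(2) Phi_inj by (meson order_le_imp_less_or_eq)
    qed
  qed
  obtain \<alpha> where a: "\<alpha> \<in> Poly_Mapping.keys f" "\<forall>x\<in>Poly_Mapping.keys f. \<Phi> x \<le> \<Phi> \<alpha>"
    using lead assms(1) by blast
  obtain \<beta> where b: "\<beta> \<in> Poly_Mapping.keys g" "\<forall>x\<in>Poly_Mapping.keys g. \<Phi> x \<le> \<Phi> \<beta>"
    using lead assms(2) by blast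
  obtain cf f' where f: "cf \<noteq> 0" "f = Poly_Mapping.single \<alpha> cf + f'" "\<forall>x\<in>Poly_Mapping.keys f'. \<Phi> x < \<Phi> \<alpha>"
    using split[OF a] by blast
  obtain cg g' where g: "cg \<noteq> 0" "g = Poly_Mapping.single \<beta> cg + g'" "\<forall>x\<in>Poly_Mapping.keys g'. \<Phi> x < \<Phi> \<beta>"
    using split[OF b] by blast
  have "f * g = Poly_Mapping.single (\<alpha> + \<beta>) (cf * cg) + Poly_Mapping.single \<alpha> cf * g' + f' * Poly_Mapping.single \<beta> cg + f' * g'"
    by (simp add: f(2) g(2) algebra_simps mult_single)
  moreover have "\<alpha> + \<beta> \<notin> Poly_Mapping.keys (Poly_Mapping.single \<alpha> cf * g')"
    by (rule nokey) (use g(3) in auto)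
  moreover have "\<alpha> + \<beta> \<notin> Poly_Mapping.keys (f' * Poly_Mapping.single \<beta> cg)"
    using nokey[of "Poly_Mapping.single \<beta> cg" \<beta> f' \<alpha>] f(3) by (auto simp: mult.commute add.commute)
  moreover have "\<alpha> + \<beta> \<notin> Poly_Mapping.keys (f' * g')"
    by (rule nokey) (use f(3) g(3) in auto)
  ultimately have "Poly_Mapping.lookup (f * g) (\<alpha> + \<beta>) = cf * cg"
    by (simp add: lookup_add in_keys_iff)
  then show ?thesis using f(1) g(1) by auto
qed

lemma var_prime_MI: "var_prime B = (MI ((\<lambda>k. Poly_Mapping.single k 1) ` B) :: ('v, 'k::field) mpoly set)"
proof -
  have "var ` B = (monom ` (\<lambda>k. Poly_Mapping.single k 1) ` B :: ('v, 'k) mpoly set)"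
    by (auto simp: var_def)
  then show ?thesis by (simp add: var_prime_def ideal_gen_monom)
qed

lemma mdvd_single: "mdvd (Poly_Mapping.single k 1) t \<longleftrightarrow> k \<in> Poly_Mapping.keys t"
  by (auto simp: mdvd_def lookup_single when_def in_keys_iff)

lemma var_prime_iff: "(g \<in> (var_prime B :: ('v, 'k::field) mpoly set)) \<longleftrightarrow> (\<forall>t\<in>Poly_Mapping.keys g. Poly_Mapping.keys t \<inter> B \<noteq> {})"
  unfolding var_prime_MI MI_def using mdvd_single by fastforce

lemma keys_add_nat: "Poly_Mapping.keys ((x::'v \<Rightarrow>\<^sub>0 nat) + y) = Poly_Mapping.keys x \<union> Poly_Mapping.keys y"
  by (auto simp: in_keys_iff lookup_add)

lemma prime_var_prime: "prime_ideal (var_prime B :: ('v::finite, 'k::field) mpoly set)"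
proof -
  let ?P = "var_prime B :: ('v, 'k) mpoly set"
  have id: "is_ideal ?P" by (simp add: var_prime_MI MI_ideal)
  have one: "1 \<notin> ?P" by (simp add: var_prime_iff)
  define proj :: "('v, 'k) mpoly \<Rightarrow> ('v, 'k) mpoly" where
    "proj p = Abs_poly_mapping (\<lambda>t. if Poly_Mapping.keys t \<inter> B = {} then Poly_Mapping.lookup p t else 0)" for p
  have lproj: "Poly_Mapping.lookup (proj p) t = (if Poly_Mapping.keys t \<inter> B = {} then Poly_Mapping.lookup p t else 0)" for p t
  proof -
    have "finite {t. (if Poly_Mapping.keys t \<inter> B = {} then Poly_Mapping.lookup p t else 0) \<noteq> 0}"
      by (rule finite_subset[OF _ finite_keys[of p]]) (auto simp: in_keys_iff)
    then show ?thesis unfolding proj_def by simp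
  qed
  have rest: "p - proj p \<in> ?P" for p
    by (auto simp: var_prime_iff in_keys_iff lookup_minus lproj split: if_splits)
  have projkeys: "t \<in> Poly_Mapping.keys (proj p) \<Longrightarrow> Poly_Mapping.keys t \<inter> B = {}" for p t
    by (auto simp: in_keys_iff lproj split: if_splits)
  have proj0: "proj p = 0 \<Longrightarrow> p \<in> ?P" for p
    using rest[of p] by simp
  have minus: "x \<in> ?P \<Longrightarrow> y \<in> ?P \<Longrightarrow> x - y \<in> ?P" for x y
    using id unfolding is_ideal_def by (metis diff_conv_add_uminus mult_minus1)
  have "\<forall>a b. a * b \<in> ?P \<longrightarrow> a \<in> ?P \<or> b \<in> ?P"
  proof (intro allI impI)
    fix a b assume ab: "a * b \<in> ?P"
    define ra rb where "ra = a - proj a" and "rb = b - proj b"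
    have ra: "ra \<in> ?P" and rb: "rb \<in> ?P" using rest ra_def rb_def by auto
    have "a * b = proj a * proj b + (proj a * rb + ra * proj b + ra * rb)"
      by (simp add: ra_def rb_def algebra_simps)
    moreover have "proj a * rb + ra * proj b + ra * rb \<in> ?P"
      using id ra rb unfolding is_ideal_def by (metis mult.commute)
    ultimately have "proj a * proj b \<in> ?P" using minus[OF ab] by (metis add_diff_cancel_right')
    moreover have "\<forall>t\<in>Poly_Mapping.keys (proj a * proj b). Poly_Mapping.keys t \<inter> B = {}"
    proof
      fix t assume "t \<in> Poly_Mapping.keys (proj a * proj b)"
      then obtain x y where "t = x + y" "x \<in> Poly_Mapping.keys (proj a)" "y \<in> Poly_Mapping.keys (proj b)"
        using keys_mult[of "proj a" "proj b"] by blast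
      then show "Poly_Mapping.keys t \<inter> B = {}" using projkeys by (auto simp: keys_add_nat)
    qed
    ultimately have "proj a * proj b = 0"
      by (metis var_prime_iff keys_eq_empty equals0I)
    then have "proj a = 0 \<or> proj b = 0" using no_zd by blast
    then show "a \<in> ?P \<or> b \<in> ?P" using proj0 by blast
  qed
  then show ?thesis using id one unfolding prime_ideal_def by auto
qed



lemma sums_restrict:
  assumes "a \<in> sums M s" "Poly_Mapping.lookup a i = 0"
  shows "a \<in> sums {u\<in>M. i \<notin> Poly_Mapping.keys u} s"
proof -
  obtain c where c: "a = (\<Sum>j<s. c j)" "\<forall>j<s. c j \<in> M" using assms(1) by (auto simp: sums_def)
  have "(\<Sum>j<s. Poly_Mapping.lookup (c j) i) = 0" using assms(2) c(1) by (simp add: lookup_sum)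
  then have "\<forall>j<s. Poly_Mapping.lookup (c j) i = 0" by simp
  then have "\<forall>j<s. c j \<in> {u\<in>M. i \<notin> Poly_Mapping.keys u}" using c(2) by (simp add: in_keys_iff)
  then show ?thesis using c(1) unfolding sums_def by blast
qed

lemma sums_restrict2:
  assumes "a \<in> sums {u\<in>M. i \<notin> Poly_Mapping.keys u} s"
  shows "a \<in> sums M s" "Poly_Mapping.lookup a i = 0"
proof -
  obtain c where c: "a = (\<Sum>j<s. c j)" "\<forall>j<s. c j \<in> {u\<in>M. i \<notin> Poly_Mapping.keys u}"
    using assms by (auto simp: sums_def)
  then show "a \<in> sums M s" unfolding sums_def by auto
  show "Poly_Mapping.lookup a i = 0" using c by (simp add: lookup_sum in_keys_iff)
qed

definition deg :: "('v::finite \<Rightarrow>\<^sub>0 nat) \<Rightarrow> nat" where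
  "deg a = (\<Sum>v\<in>UNIV. Poly_Mapping.lookup a v)"

lemma mdvd_deg_less: "mdvd b a \<Longrightarrow> b \<noteq> a \<Longrightarrow> deg b < deg a"
  unfolding deg_def mdvd_def
  by (rule sum_strict_mono_ex1) (auto simp: poly_mapping_eq_iff fun_eq_iff intro: le_neq_implies_less)

lemma mingens_below:
  fixes I :: "('v::finite, 'k::field) mpoly set"
  shows "monom b \<in> I \<Longrightarrow> \<exists>m\<in>mingens I. mdvd m b"
proof (induction "deg b" arbitrary: b rule: less_induct)
  case less
  show ?case
  proof (cases "b \<in> mingens I")
    case True then show ?thesis by (metis mdvd_refl)
  next
    case False
    then obtain b' where "monom b' \<in> I" "mdvd b' b" "b' \<noteq> b"
      using less.prems unfolding mingens_def by blast
    then show ?thesis using less.hyps mdvd_deg_less mdvd_trans by metis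
  qed
qed

lemma mult_monom_MI:
  "((g::('v, 'k::field) mpoly) * monom e \<in> MI T) \<longleftrightarrow> (\<forall>w\<in>Poly_Mapping.keys g. \<exists>a\<in>T. mdvd a (w + e))"
  by (simp add: MI_def keys_mult_monom)

lemma monom_mult_MI:
  "(monom e * (g::('v, 'k::field) mpoly) \<in> MI T) \<longleftrightarrow> (\<forall>w\<in>Poly_Mapping.keys g. \<exists>a\<in>T. mdvd a (e + w))"
  by (simp add: MI_def keys_monom_mult)

theorem corollary2p3:
  fixes I :: "('v::finite, 'k::field) mpoly set"
    and A :: "'v set" and U :: "('v \<Rightarrow>\<^sub>0 nat) set" and s :: nat
  assumes "squarefree_monomial_ideal I"
    and "independent I U" and "card U = beta1 I"
    and "s > 0"
    and "\<forall>i \<in> (\<Union>u\<in>U. Poly_Mapping.keys u).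
           (var_prime (A - {i}) :: ('v, 'k) mpoly set) \<notin> Ass (ideal_pow (deletion I i) s)"
    and "var_prime A \<in> Ass (ideal_pow I s)"
  shows "s \<ge> beta1 I + 1"
proof -
  obtain S where S: "\<forall>a\<in>S. squarefree_mon a" "I = MI S"
    using assms(1) unfolding squarefree_monomial_ideal_def by (auto simp: ideal_gen_monom)
  define M where "M = mingens I"
  have monI: "monom a \<in> I \<longleftrightarrow> (\<exists>b\<in>S. mdvd b a)" for a using S(2) by (simp add: monom_in_MI)
  have MS: "M \<subseteq> S"
  proof
    fix m assume "m \<in> M"
    then have m: "monom m \<in> I" "\<forall>b. monom b \<in> I \<and> mdvd b m \<longrightarrow> b = m"
      unfolding M_def mingens_def by auto
    then obtain b where "b \<in> S" "mdvd b m" using monI by blast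
    moreover then have "monom b \<in> I" using monI mdvd_refl by blast
    ultimately show "m \<in> S" using m(2) by blast
  qed
  have IM: "I = MI M"
  proof -
    have "MI S \<subseteq> (MI M :: ('v, 'k) mpoly set)"
    proof
      fix g :: "('v, 'k) mpoly" assume "g \<in> MI S"
      show "g \<in> MI M" unfolding MI_def
      proof safe
        fix t assume "t \<in> Poly_Mapping.keys g"
        then obtain b where b: "b \<in> S" "mdvd b t" using \<open>g \<in> MI S\<close> by (auto simp: MI_def)
        then have "monom b \<in> I" using monI mdvd_refl by blast
        then obtain m where "m \<in> M" "mdvd m b" using mingens_below[of b I] M_def by blast
        then show "\<exists>a\<in>M. mdvd a t" using b(2) mdvd_trans by blast
      qed
    qed
    moreover have "MI M \<subseteq> (MI S :: ('v, 'k) mpoly set)" using MS unfolding MI_def by blast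
    ultimately show ?thesis using S(2) by blast
  qed
  define T where "T = sums M s"
  have Is: "ideal_pow I s = MI T" unfolding T_def IM by (rule ideal_pow_MI)
  have "prime_ideal (var_prime A :: ('v, 'k) mpoly set) \<and> (\<exists>f. (var_prime A :: ('v, 'k) mpoly set) = {g. g * f \<in> MI T})"
    using assms(6) unfolding Ass_def Is mem_Collect_eq .
  then obtain f where f: "(var_prime A :: ('v, 'k) mpoly set) = {g. g * f \<in> MI T}"
    by (elim conjE exE)
  have fmem: "g \<in> (var_prime A :: ('v, 'k) mpoly set) \<longleftrightarrow> g * f \<in> MI T" for g
    by (simp add: f)
  have fa: "\<forall>k\<in>A. \<forall>t\<in>Poly_Mapping.keys f. \<exists>a\<in>T. mdvd a (Poly_Mapping.single k 1 + t)"
  proof (intro ballI)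
    fix k t assume k: "k \<in> A" and t: "t \<in> Poly_Mapping.keys f"
    have "(monom (Poly_Mapping.single k 1) :: ('v, 'k) mpoly) \<in> var_prime A"
      using k by (simp add: var_prime_iff)
    then have "monom (Poly_Mapping.single k 1) * f \<in> MI T" using fmem by blast
    then show "\<exists>a\<in>T. mdvd a (Poly_Mapping.single k 1 + t)"
      using t unfolding monom_mult_MI by (rule bspec)
  qed
  have "\<exists>t\<in>Poly_Mapping.keys f. \<forall>w. (\<exists>a\<in>T. mdvd a (w + t)) \<longrightarrow> Poly_Mapping.keys w \<inter> A \<noteq> {}"
  proof (rule ccontr)
    assume "\<not> ?thesis"
    then have ex: "\<forall>t\<in>Poly_Mapping.keys f. \<exists>w. (\<exists>a\<in>T. mdvd a (w + t)) \<and> Poly_Mapping.keys w \<inter> A = {}"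
      by blast
    obtain wf where wf: "\<forall>t\<in>Poly_Mapping.keys f. (\<exists>a\<in>T. mdvd a (wf t + t)) \<and> Poly_Mapping.keys (wf t) \<inter> A = {}"
      using bchoice[OF ex] by blast
    define W where "W = (\<Sum>t\<in>Poly_Mapping.keys f. wf t)"
    have Wd: "mdvd (wf t) W" if "t \<in> Poly_Mapping.keys f" for t
      unfolding W_def mdvd_def lookup_sum
    proof
      fix v show "Poly_Mapping.lookup (wf t) v \<le> (\<Sum>t\<in>Poly_Mapping.keys f. Poly_Mapping.lookup (wf t) v)"
        by (rule member_le_sum) (use that in auto)
    qed
    have "Poly_Mapping.keys W \<subseteq> (\<Union>t\<in>Poly_Mapping.keys f. Poly_Mapping.keys (wf t))"
      unfolding W_def by (rule keys_sum)
    then have WA: "Poly_Mapping.keys W \<inter> A = {}" using wf by blast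
    have "(monom W :: ('v, 'k) mpoly) * f \<in> MI T"
      unfolding monom_mult_MI
    proof
      fix t assume t: "t \<in> Poly_Mapping.keys f"
      then obtain a where "a \<in> T" "mdvd a (wf t + t)" using wf by blast
      moreover have "mdvd (wf t + t) (W + t)" using Wd[OF t] by (simp add: mdvd_add_mono)
      ultimately show "\<exists>a\<in>T. mdvd a (W + t)" using mdvd_trans by blast
    qed
    then have "(monom W :: ('v, 'k) mpoly) \<in> var_prime A" using fmem by blast
    then show False using WA by (simp add: var_prime_iff)
  qed
  then obtain t where t: "t \<in> Poly_Mapping.keys f"
    and tb: "\<forall>w. (\<exists>a\<in>T. mdvd a (w + t)) \<longrightarrow> Poly_Mapping.keys w \<inter> A \<noteq> {}" by blast
  have UM: "U \<subseteq> M" and disj: "\<forall>f\<in>U. \<forall>g\<in>U. f \<noteq> g \<longrightarrow> Poly_Mapping.keys f \<inter> Poly_Mapping.keys g = {}"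
    using assms(2) unfolding independent_def M_def by auto
  show ?thesis
  proof (rule ccontr)
    assume "\<not> ?thesis"
    then have sU: "s \<le> card U" using assms(3) by simp
    have finU: "finite U"
    proof (rule ccontr)
      assume "infinite U" then have "card U = 0" by simp
      then show False using sU assms(4) by simp
    qed
    have "\<exists>u\<in>U. \<exists>i\<in>Poly_Mapping.keys u. Poly_Mapping.lookup t i = 0"
    proof (rule ccontr)
      assume "\<not> ?thesis"
      then have nz: "\<forall>u\<in>U. \<forall>i\<in>Poly_Mapping.keys u. Poly_Mapping.lookup t i \<noteq> 0" by auto
      have dv: "mdvd u t" if "u \<in> U" for u
        unfolding mdvd_def
      proof
        fix v
        have sq: "Poly_Mapping.lookup u v \<le> 1" using that UM MS S(1) unfolding squarefree_mon_def by blast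
        show "Poly_Mapping.lookup u v \<le> Poly_Mapping.lookup t v"
        proof (cases "Poly_Mapping.lookup u v = 0")
          case False
          then have "v \<in> Poly_Mapping.keys u" by (simp add: in_keys_iff)
          then have "Poly_Mapping.lookup t v \<noteq> 0" using nz that by blast
          then show ?thesis using sq by linarith
        qed simp
      qed
      obtain U' where U': "U' \<subseteq> U" "card U' = s" "finite U'"
        using obtain_subset_with_card_n[OF sU] by blast
      obtain h where h: "bij_betw h {0..<s} U'" using ex_bij_betw_nat_finite[OF U'(3)] U'(2) by auto
      have hM: "\<forall>j<s. h j \<in> M" using h U'(1) UM by (auto simp: bij_betw_def image_subset_iff)
      have aT: "(\<Sum>j<s. h j) \<in> T" unfolding T_def sums_def mem_Collect_eq
        by (rule exI[of _ h]) (use hM in simp)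
      have aeq: "(\<Sum>j<s. h j) = (\<Sum>u\<in>U'. u)"
        using sum.reindex_bij_betw[OF h, of "\<lambda>u. u"] by (simp add: lessThan_atLeast0)
      have "mdvd (\<Sum>u\<in>U'. u) t" unfolding mdvd_def lookup_sum
      proof
        fix v
        show "(\<Sum>u\<in>U'. Poly_Mapping.lookup u v) \<le> Poly_Mapping.lookup t v"
        proof (cases "\<exists>u0\<in>U'. v \<in> Poly_Mapping.keys u0")
          case True
          then obtain u0 where u0: "u0 \<in> U'" "v \<in> Poly_Mapping.keys u0" by blast
          have "(\<Sum>u\<in>U'. Poly_Mapping.lookup u v) = Poly_Mapping.lookup u0 v"
          proof -
            have "\<forall>x\<in>U' - {u0}. Poly_Mapping.lookup x v = 0"
            proof
              fix x assume x: "x \<in> U' - {u0}"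
              then have "Poly_Mapping.keys x \<inter> Poly_Mapping.keys u0 = {}" using disj u0 U'(1) by blast
              then have "v \<notin> Poly_Mapping.keys x" using u0(2) by blast
              then show "Poly_Mapping.lookup x v = 0" by (simp add: in_keys_iff)
            qed
            then have "(\<Sum>u\<in>U' - {u0}. Poly_Mapping.lookup u v) = 0" by simp
            then show ?thesis using sum.remove[OF U'(3) u0(1), of "\<lambda>u. Poly_Mapping.lookup u v"] by simp
          qed
          also have "\<dots> \<le> Poly_Mapping.lookup t v" using dv u0 U'(1) unfolding mdvd_def by blast
          finally show ?thesis .
        next
          case False
          then show ?thesis by (simp add: in_keys_iff)
        qed
      qed
      then have "\<exists>a\<in>T. mdvd a (0 + t)" using aT aeq by auto
      then have "Poly_Mapping.keys (0::'v \<Rightarrow>\<^sub>0 nat) \<inter> A \<noteq> {}" using tb by blast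
      then show False by simp
    qed
    then obtain u i where ui: "u \<in> U" "i \<in> Poly_Mapping.keys u" "Poly_Mapping.lookup t i = 0" by blast
    define Di where "Di = {u\<in>M. i \<notin> Poly_Mapping.keys u}"
    define Ti where "Ti = sums Di s"
    have del: "ideal_pow (deletion I i) s = (MI Ti :: ('v, 'k) mpoly set)"
      unfolding deletion_def ideal_gen_monom Ti_def Di_def M_def by (rule ideal_pow_MI)
    have key: "(\<exists>a\<in>Ti. mdvd a (w + t)) \<longleftrightarrow> Poly_Mapping.keys w \<inter> (A - {i}) \<noteq> {}" for w
    proof
      assume "\<exists>a\<in>Ti. mdvd a (w + t)"
      then obtain a where a: "a \<in> Ti" "mdvd a (w + t)" by blast
      have aT: "a \<in> T" and ai: "Poly_Mapping.lookup a i = 0"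
        using sums_restrict2[of a M i s] a(1) unfolding Ti_def Di_def T_def by auto
      define w' where "w' = Poly_Mapping.update i 0 w"
      have "mdvd a (w' + t)" using a(2) ai unfolding mdvd_def w'_def
        by (auto simp: lookup_add lookup_update)
      then have "Poly_Mapping.keys w' \<inter> A \<noteq> {}" using tb aT by blast
      then show "Poly_Mapping.keys w \<inter> (A - {i}) \<noteq> {}"
        unfolding w'_def by (auto simp: keys_update)
    next
      assume "Poly_Mapping.keys w \<inter> (A - {i}) \<noteq> {}"
      then obtain k where k: "k \<in> Poly_Mapping.keys w" "k \<in> A" "k \<noteq> i" by blast
      obtain a where a: "a \<in> T" "mdvd a (Poly_Mapping.single k 1 + t)" using fa k(2) t by blast
      have "Poly_Mapping.lookup a i \<le> Poly_Mapping.lookup (Poly_Mapping.single k 1 + t) i"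
        using a(2) unfolding mdvd_def by blast
      also have "\<dots> = 0" using ui(3) k(3) by (simp add: lookup_add lookup_single)
      finally have "Poly_Mapping.lookup a i = 0" by simp
      then have "a \<in> Ti" using sums_restrict[of a M s i] a(1) unfolding Ti_def Di_def T_def by auto
      moreover have "mdvd (Poly_Mapping.single k 1 + t) (w + t)"
        using mdvd_add_mono[OF iffD2[OF mdvd_single k(1)] mdvd_refl[of t]] .
      ultimately show "\<exists>a\<in>Ti. mdvd a (w + t)" using a(2) mdvd_trans by blast
    qed
    have "(var_prime (A - {i}) :: ('v, 'k) mpoly set) = {g. g * monom t \<in> MI Ti}"
    proof (rule set_eqI)
      fix g :: "('v, 'k) mpoly"
      have "g * monom t \<in> MI Ti \<longleftrightarrow> (\<forall>w\<in>Poly_Mapping.keys g. \<exists>a\<in>Ti. mdvd a (w + t))"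
        by (rule mult_monom_MI)
      also have "\<dots> \<longleftrightarrow> (\<forall>w\<in>Poly_Mapping.keys g. Poly_Mapping.keys w \<inter> (A - {i}) \<noteq> {})"
        using key by blast
      also have "\<dots> \<longleftrightarrow> g \<in> var_prime (A - {i})" by (simp add: var_prime_iff)
      finally show "g \<in> var_prime (A - {i}) \<longleftrightarrow> g \<in> {g. g * monom t \<in> MI Ti}" by simp
    qed
    then have "(var_prime (A - {i}) :: ('v, 'k) mpoly set) \<in> Ass (ideal_pow (deletion I i) s)"
      unfolding Ass_def del using prime_var_prime by blast
    then show False using assms(5) ui by blast
  qed
qed

end
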